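(* For every integer $n\ge 0$, \[ \sum_{k=0}^{n}(-4)^k\frac{\binom{n}{k}}{\binom{2k}{k}}\,k\,H_{2k} =\frac{n\{H_{n}-2H_{2n}\}}{(2n-1)(2n-3)}+\frac{n(20n^2-24n-1)}{(2n-1)^2(2n-3)^2}. \]
   Context: For an integer $m\ge 0$, $H_m$ denotes the $m$-th harmonic number: $H_0=0$ and $H_m=\sum_{j=1}^m \frac1j$ for $m\ge1$. $\binom{n}{k}$ is the usual binomial coefficient. *)

theory Defs
  imports "HOL-Analysis.Analysis"
begin

end

theory Submission
  imports Defs
begin

definition u :: "nat \<Rightarrow> nat \<Rightarrow> real" where
  "u n k = (-4::real)^k * (real (n choose k) / real ((2*k) choose k))"

lemma binom_step: "Suc k * (n choose Suc k) = (n - k) * (n choose k)"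
proof (cases "k < n")
  case True
  define b where "b = n - Suc k"
  have n: "n = Suc (k + b)" using True unfolding b_def by simp
  show ?thesis using Suc_times_binomial_add[of k b] n by simp
next
  case False
  then show ?thesis by simp
qed

lemma central_step: "real (Suc k) * real ((2*Suc k) choose Suc k) = 2 * (2 * real k + 1) * real ((2*k) choose k)"
proof -
  have a: "Suc k * (Suc (Suc (2*k)) choose Suc k) = Suc (Suc (2*k)) * (Suc (2*k) choose k)"
    by (rule Suc_times_binomial)
  have s: "(Suc (2*k) choose k) = (Suc (2*k) choose Suc k)"
    using binomial_symmetric[of k "Suc (2*k)"] by (simp add: Suc_diff_le)
  have b: "Suc k * (Suc (2*k) choose Suc k) = Suc (2*k) * ((2*k) choose k)"
    by (rule Suc_times_binomial)
  have e: "2 * Suc k = Suc (Suc (2*k))" by simp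
  have "Suc k * ((2*Suc k) choose Suc k) = Suc (Suc (2*k)) * (Suc (2*k) choose Suc k)"
    unfolding e a s ..
  also have "\<dots> = 2 * (Suc k * (Suc (2*k) choose Suc k))"
    unfolding e[symmetric] by (simp only: mult.assoc)
  also have "\<dots> = 2 * (Suc (2*k) * ((2*k) choose k))" unfolding b ..
  finally have "real (Suc k * ((2*Suc k) choose Suc k)) = real (2 * (Suc (2*k) * ((2*k) choose k)))"
    by (rule arg_cong)
  then show ?thesis by (simp only: of_nat_mult of_nat_Suc of_nat_numeral) (simp add: algebra_simps)
qed

lemma R1: "(2 * real k + 1) * u n (Suc k) = 2 * (real k - real n) * u n k"
proof -
  have c0: "real ((2*k) choose k) > 0" by simp
  have c1: "real ((2*Suc k) choose Suc k) > 0" by (simp del: mult_Suc_right)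
  have bs: "real (Suc k) * real (n choose Suc k) = real (n - k) * real (n choose k)"
    using arg_cong[OF binom_step[of k n], of real] by (simp only: of_nat_mult)
  have bs2: "real (Suc k) * real (n choose Suc k) = (real n - real k) * real (n choose k)"
  proof (cases "k \<le> n")
    case True then show ?thesis using bs by (simp add: of_nat_diff)
  next
    case False then show ?thesis by (simp add: binomial_eq_0)
  qed
  
  have e1: "real ((2*Suc k) choose Suc k) = 2 * (2 * real k + 1) * real ((2*k) choose k) / real (Suc k)"
    using central_step[of k] by (simp add: field_simps del: mult_Suc_right)
  have e2: "real (n choose Suc k) = (real n - real k) * real (n choose k) / real (Suc k)"
    using bs2 by (simp add: field_simps del: of_nat_Suc)
  have alg: "\<And>x c B K N::real. B > 0 \<Longrightarrow> K \<ge> 0 \<Longrightarrow>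
     (2*K+1) * ((-4) * x * (((N-K)*c/(K+1)) / (2*(2*K+1)*B/(K+1)))) = 2*(K-N) * (x*(c/B))"
  proof -
    fix x c B K N :: real assume "B > 0" "K \<ge> 0"
    then have h: "2*K+1 \<noteq> 0" "K+1 \<noteq> 0" "B \<noteq> 0" by auto
    show "(2*K+1) * ((-4) * x * (((N-K)*c/(K+1)) / (2*(2*K+1)*B/(K+1)))) = 2*(K-N) * (x*(c/B))"
    proof -
      have "((N-K)*c/(K+1)) / (2*(2*K+1)*B/(K+1)) = (N-K)*c/(2*(2*K+1)*B)"
        using h by (simp add: divide_simps)
      then show ?thesis using h by (simp add: divide_simps) (simp add: algebra_simps)
    qed
  qed
  show ?thesis
    unfolding u_def e1 e2 power_Suc of_nat_Suc using alg[OF c0, of "real k"] by simp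
qed

lemma R2: "(real n + 1 - real k) * u (Suc n) k = (real n + 1) * u n k"
proof (cases "k \<le> Suc n")
  case True
  have "(Suc n - k) * (Suc n choose k) = Suc n * (n choose k)"
    using binomial_absorb_comp[of "Suc n" k] by simp
  then have "real ((Suc n - k) * (Suc n choose k)) = real (Suc n * (n choose k))"
    by (rule arg_cong)
  then have e: "real (Suc n - k) * real (Suc n choose k) = real (Suc n) * real (n choose k)"
    by (simp only: of_nat_mult)
  have d: "real (Suc n - k) = real n + 1 - real k" using True by (simp add: of_nat_diff)
  have "(real n + 1 - real k) * real (Suc n choose k) = (real n + 1) * real (n choose k)"
    using e unfolding d by simp
  then have "(-4)^k / real ((2*k) choose k) * ((real n + 1 - real k) * real (Suc n choose k))
     = (-4)^k / real ((2*k) choose k) * ((real n + 1) * real (n choose k))" by simp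
  then show ?thesis unfolding u_def by (simp add: ac_simps)
next
  case False then show ?thesis by (simp add: u_def binomial_eq_0)
qed

definition cc0 :: "real \<Rightarrow> real" where "cc0 N = -(2*N-1)*(2*N-3)/N"
definition cc1 :: "real \<Rightarrow> real" where "cc1 N = (2*N+1)*(2*N-1)/(N+1)"
definition pp :: "real \<Rightarrow> real \<Rightarrow> real" where
  "pp N K = -(2*N-1) * K * (K-1) * (2*K-1) / (N*(N+1))"
definition qq :: "real \<Rightarrow> real \<Rightarrow> real" where
  "qq N K = ((10*N+14*N^2+4*N^3) - (1+23*N+36*N^2+20*N^3) * K + (-3+8*N+36*N^2+16*N^3) * K^2
     + (4-16*N^2) * K^3) / (N*(N+1)*(2*N-3)*(2*N+1))"

lemma key_alg:
  fixes W h K N :: real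
  assumes N: "N > 0" "2*N \<noteq> 3" and K: "K \<ge> 0"
  shows "cc0 N * ((N+1-K)/(N+1) * W * K * h) + cc1 N * (W * K * h) =
    (2*(K-N-1)/(2*K+1) * W) * (pp N (K+1) * (h + 1/(2*K+1) + 1/(2*K+2)) + qq N (K+1))
    - W * (pp N K * h + qq N K)"
proof -
  have h: "N \<noteq> 0" "N+1 \<noteq> 0" "2*N-3 \<noteq> 0" "2*N+1 \<noteq> 0" "2*K+1 \<noteq> 0" "2*K+2 \<noteq> 0"
    using N K by auto
  show ?thesis unfolding cc0_def cc1_def pp_def qq_def
    using h by (simp add: divide_simps) (simp add: algebra_simps power2_eq_square power3_eq_cube)
qed

definition GG :: "nat \<Rightarrow> nat \<Rightarrow> real" where
  "GG n k = u (Suc n) k * (pp (real n) (real k) * harm (2*k) + qq (real n) (real k))"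

lemma harm_2Suc: "harm (2 * Suc k) = harm (2*k) + 1/(2*real k+1) + 1/(2*real k+2)"
proof -
  have "2 * Suc k = Suc (Suc (2*k))" by simp
  then show ?thesis by (simp add: harm_Suc inverse_eq_divide add.commute add.left_commute)
qed

lemma tele_step:
  assumes n: "n \<ge> 1"
  shows "cc0 (real n) * (u n k * real k * harm (2*k)) + cc1 (real n) * (u (Suc n) k * real k * harm (2*k))
     = GG n (Suc k) - GG n k"
proof -
  have w1: "u (Suc n) (Suc k) = 2*(real k - real n - 1)/(2*real k+1) * u (Suc n) k"
    using R1[of k "Suc n"] by (simp add: field_simps)
  have w2: "u n k = (real n + 1 - real k)/(real n + 1) * u (Suc n) k"
    using R2[of n k] by (simp add: field_simps)
  have N: "real n > 0" using n by auto
  have "2 * real n \<noteq> 3"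
  proof
    assume "2 * real n = 3" then have "real (2*n) = real 3" by simp
    then have "2*n = 3" by (simp only: of_nat_eq_iff)
    then show False by presburger
  qed
  note ka = key_alg[OF N(1) this, of "real k" "u (Suc n) k" "harm (2*k)"]
  show ?thesis unfolding GG_def w1 w2 harm_2Suc of_nat_Suc using ka by (simp add: ac_simps)
qed

lemma u_zero: "u n 0 = 1" by (simp add: u_def)
lemma u_big: "n < k \<Longrightarrow> u n k = 0" by (simp add: u_def binomial_eq_0)

lemma two_ne3: "2 * real (n::nat) \<noteq> 3"
proof
  assume "2 * real n = 3" then have "real (2*n) = real (3::nat)" by simp
  then have "2*n = 3" by (simp only: of_nat_eq_iff)
  then show False by presburger
qed

definition SS :: "nat \<Rightarrow> real" where "SS n = (\<Sum>k=0..n. u n k * real k * harm (2*k))"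

lemma recur:
  assumes n: "n \<ge> 1"
  shows "cc0 (real n) * SS n + cc1 (real n) * SS (Suc n) = - qq (real n) 0"
proof -
  have s1: "SS n = (\<Sum>k<Suc (Suc n). u n k * real k * harm (2*k))"
    unfolding SS_def by (simp add: atLeast0AtMost lessThan_Suc_atMost[symmetric] u_big)
  have s2: "SS (Suc n) = (\<Sum>k<Suc (Suc n). u (Suc n) k * real k * harm (2*k))"
    unfolding SS_def by (simp add: atLeast0AtMost lessThan_Suc_atMost[symmetric])
  have "cc0 (real n) * SS n + cc1 (real n) * SS (Suc n)
     = (\<Sum>k<Suc (Suc n). cc0 (real n) * (u n k * real k * harm (2*k)) + cc1 (real n) * (u (Suc n) k * real k * harm (2*k)))"
    unfolding s1 s2 by (simp only: sum_distrib_left sum.distrib)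
  also have "\<dots> = (\<Sum>k<Suc (Suc n). GG n (Suc k) - GG n k)"
    using tele_step[OF n] by simp
  also have "\<dots> = GG n (Suc (Suc n)) - GG n 0" by (rule sum_lessThan_telescope)
  also have "\<dots> = - qq (real n) 0" by (simp add: GG_def u_big u_zero harm_def)
  finally show ?thesis .
qed

definition Rf :: "real \<Rightarrow> real \<Rightarrow> real \<Rightarrow> real" where
  "Rf N a b = N * (a - 2 * b) / ((2 * N - 1) * (2 * N - 3))
      + N * (20 * N^2 - 24 * N - 1) / ((2 * N - 1)^2 * (2 * N - 3)^2)"

lemma step_alg:
  fixes N a b :: real
  assumes "N \<ge> 1" "2*N \<noteq> 3"
  shows "cc0 N * Rf N a b + cc1 N * Rf (N+1) (a + 1/(N+1)) (b + 1/(2*N+1) + 1/(2*N+2)) = - qq N 0"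
proof -
  have h: "N \<noteq> 0" "N+1 \<noteq> 0" "2*N-3 \<noteq> 0" "2*N+1 \<noteq> 0" "2*N-1 \<noteq> 0" "2*N+2 \<noteq> 0"
    "2*(N+1)-1 \<noteq> 0" "2*(N+1)-3 \<noteq> 0"
    using assms by auto
  show ?thesis unfolding cc0_def cc1_def Rf_def qq_def
    using h by (simp add: divide_simps) (simp add: algebra_simps power2_eq_square power3_eq_cube)
qed

lemma SS_closed: "n \<ge> 1 \<Longrightarrow> SS n = Rf (real n) (harm n) (harm (2*n))"
proof (induction n rule: nat_induct_at_least)
  case base
  have h1: "harm (Suc 0) = (1::real)" by (simp add: harm_def)
  have h2: "harm 2 = (3/2::real)" by (simp add: numeral_2_eq_2 harm_Suc harm_def)
  show ?case using h1 h2 by (simp add: SS_def Rf_def u_def)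
next
  case (Suc n)
  have N: "real n \<ge> 1" using Suc.hyps by simp
  have a: "harm (Suc n) = harm n + 1/(real n+1)" by (simp add: harm_Suc inverse_eq_divide add.commute)
  have c1: "cc1 (real n) \<noteq> 0" unfolding cc1_def using N by auto
  have rr: "Rf (real (Suc n)) (harm (Suc n)) (harm (2 * Suc n))
     = Rf (real n + 1) (harm n + 1/(real n+1)) (harm (2*n) + 1/(2*real n+1) + 1/(2*real n+2))"
    unfolding a harm_2Suc by (simp add: add.commute)
  have e1: "cc0 (real n) * SS n + cc1 (real n) * SS (Suc n) = - qq (real n) 0" by (rule recur[OF Suc.hyps])
  note e2 = step_alg[OF N two_ne3, of "harm n" "harm (2*n)"]
  have "cc1 (real n) * SS (Suc n) = cc1 (real n) * Rf (real (Suc n)) (harm (Suc n)) (harm (2 * Suc n))"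
    unfolding rr using e1[unfolded Suc.IH] e2 by linarith
  then show ?case using c1 by simp
qed

theorem theorem2:
  fixes n :: nat
  shows "(\<Sum>k=0..n. (-4::real)^k * (real (n choose k) / real ((2*k) choose k)) * real k * harm (2*k))
    = real n * (harm n - 2 * harm (2*n)) / ((2 * real n - 1) * (2 * real n - 3))
      + real n * (20 * (real n)^2 - 24 * real n - 1) / ((2 * real n - 1)^2 * (2 * real n - 3)^2)"
proof (cases "n = 0")
  case True
  then show ?thesis by simp
next
  case False
  then have "n \<ge> 1" by simp
  from SS_closed[OF this] show ?thesis unfolding SS_def Rf_def u_def by simp
qed

end
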